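(* Under the standing setup with $\gamma>0$, the Nash equilibrium $(g^*,h^* )$ of the zero-sum game in which Georgia chooses $g\in[0,\underline s]$ to minimize $f(g,h)$ and Hank chooses $h\in[\overline s,1]$ to maximize $f(g,h)$ is as follows: (i) if $m(0,1)\ge0$, then $(g^*,h^* )=(0,1)$ if $q(0,1)\ge0$; $(g^*,h^* )=(0,\overline s)$ if $q(0,\overline s)\le0$; and $(g^*,h^* )=(0,r(0))$ otherwise; (ii) if $m(\underline s,1)\le0$, then $(g^*,h^* )=(\underline s,1)$; (iii) otherwise, $(g^*,h^* )=(w(1),1)$.
   Context: Standing setup. Fix $n\in\mathbb N$ and $W=[w_{ij}]\in\mathbb R^{n\times n}$ with $w_{ij}\ge0$, $w_{ii}=0$. Let $\|W\|_\infty=\max_i\sum_j|w_{ij}|$, $\|W\|_1=\max_j\sum_i|w_{ij}|$, let $\lambda$ be the spectral radius of $W$, and assume there is $c\in\mathbb R^n$ with all entries positive and $W^\top c=\lambda c$. Fix $\beta\ge\gamma\ge0$ with $1-\max\{\|W\|_\infty,\|W\|_1\}>\max\{2\beta,4\gamma\}$. Fix $s\in[0,1]^n$, $\overline s=\max_is_i$, $\underline s=\min_is_i$. Set $\widehat c_i=c_i/\sum_jc_j$, $\widehat s=\sum_i\widehat c_is_i$, $\chi=\sum_i\widehat c_is_i\sum_jw_{ij}$. Define $$f(g,h)=\frac{(1-2\beta+(h-g)\gamma)\widehat s-\chi+(h+g)\beta+(g^2-h^2)\gamma}{1-\lambda+(g-h)\gamma}\,c^\top\mathbf 1$$ (the centrality-weighted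 steady state of the opinion dynamics with sources $g,h$), and $$q(g,h)=(\beta+\gamma\widehat s-2\gamma h)(1-\lambda+\gamma g)+\gamma\big[(1-2\beta-g\gamma)\widehat s-\chi+g\beta+g^2\gamma\big]+\gamma^2h^2,$$ $$m(g,h)=(\beta-\gamma\widehat s+2\gamma g)(1-\lambda-h\gamma)+g^2\gamma^2-\gamma\big[(1-2\beta+h\gamma)\widehat s+h\beta-h^2\gamma-\chi\big],$$ $$r(g)=\frac{1-\lambda}{\gamma}+g-\frac{1}{\gamma}\sqrt{(1-\lambda)(1-\lambda-\beta+2g\gamma)-(2-\lambda-2\beta)\gamma\widehat s-2g\beta\gamma+\gamma\chi},$$ $$w(h)=\frac{1}{\gamma}\sqrt{(1-\lambda)(1-\lambda-2h\gamma-\beta)+(2-\lambda-2\beta)\gamma\widehat s+2h\beta\gamma-\chi\gamma}-\frac{1-\lambda}{\gamma}+h.$$ *)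

theory Defs
  imports "Jordan_Normal_Form.Spectral_Radius"
begin

definition norm_inf_mat :: "real mat \<Rightarrow> real" where
  "norm_inf_mat W = Max {(\<Sum>j<dim_col W. \<bar>W $$ (i,j)\<bar>) | i. i < dim_row W}"

definition norm_one_mat :: "real mat \<Rightarrow> real" where
  "norm_one_mat W = Max {(\<Sum>i<dim_row W. \<bar>W $$ (i,j)\<bar>) | j. j < dim_col W}"

definition spec_rad :: "real mat \<Rightarrow> real" where
  "spec_rad W = spectral_radius (map_mat complex_of_real W)"

definition chat :: "nat \<Rightarrow> real vec \<Rightarrow> nat \<Rightarrow> real" where
  "chat n c i = c $ i / (\<Sum>j<n. c $ j)"

definition shat :: "nat \<Rightarrow> real vec \<Rightarrow> real vec \<Rightarrow> real" where
  "shat n c s = (\<Sum>i<n. chat n c i * s $ i)"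

definition chi :: "nat \<Rightarrow> real mat \<Rightarrow> real vec \<Rightarrow> real vec \<Rightarrow> real" where
  "chi n W c s = (\<Sum>i<n. chat n c i * s $ i * (\<Sum>j<n. W $$ (i,j)))"

definition csum :: "nat \<Rightarrow> real vec \<Rightarrow> real" where
  "csum n c = (\<Sum>j<n. c $ j)"

(* The functions f, q, m, r, w of the paper; parameters:
   la = \<lambda>, be = \<beta>, ga = \<gamma>, sh = \<widehat>s, ch = \<chi>, C = c^T 1 *)
definition fss :: "real \<Rightarrow> real \<Rightarrow> real \<Rightarrow> real \<Rightarrow> real \<Rightarrow> real \<Rightarrow> real \<Rightarrow> real \<Rightarrow> real" where
  "fss la be ga sh ch C g h =
     ((1 - 2*be + (h - g)*ga) * sh - ch + (h + g)*be + (g^2 - h^2)*ga)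
       / (1 - la + (g - h)*ga) * C"

definition qf :: "real \<Rightarrow> real \<Rightarrow> real \<Rightarrow> real \<Rightarrow> real \<Rightarrow> real \<Rightarrow> real \<Rightarrow> real" where
  "qf la be ga sh ch g h =
     (be + ga*sh - 2*ga*h) * (1 - la + ga*g)
     + ga * ((1 - 2*be - g*ga)*sh - ch + g*be + g^2*ga) + ga^2 * h^2"

definition mf :: "real \<Rightarrow> real \<Rightarrow> real \<Rightarrow> real \<Rightarrow> real \<Rightarrow> real \<Rightarrow> real \<Rightarrow> real" where
  "mf la be ga sh ch g h =
     (be - ga*sh + 2*ga*g) * (1 - la - h*ga) + g^2 * ga^2
     - ga * ((1 - 2*be + h*ga)*sh + h*be - h^2*ga - ch)"

definition rf :: "real \<Rightarrow> real \<Rightarrow> real \<Rightarrow> real \<Rightarrow> real \<Rightarrow> real \<Rightarrow> real" where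
  "rf la be ga sh ch g =
     (1 - la)/ga + g
     - (1/ga) * sqrt ((1 - la)*(1 - la - be + 2*g*ga) - (2 - la - 2*be)*ga*sh
                      - 2*g*be*ga + ga*ch)"

definition wf :: "real \<Rightarrow> real \<Rightarrow> real \<Rightarrow> real \<Rightarrow> real \<Rightarrow> real \<Rightarrow> real" where
  "wf la be ga sh ch h =
     (1/ga) * sqrt ((1 - la)*(1 - la - 2*h*ga - be) + (2 - la - 2*be)*ga*sh
                    + 2*h*be*ga - ch*ga)
     - (1 - la)/ga + h"

definition nash_eq :: "(real \<Rightarrow> real \<Rightarrow> real) \<Rightarrow> real set \<Rightarrow> real set \<Rightarrow> real \<Rightarrow> real \<Rightarrow> bool" where
  "nash_eq F G H g h \<longleftrightarrow> g \<in> G \<and> h \<in> H \<and>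
     (\<forall>g'\<in>G. F g h \<le> F g' h) \<and> (\<forall>h'\<in>H. F g h' \<le> F g h)"

end

theory Submission
  imports Defs
begin



lemma hid:
  "((1 - 2*be + (h1 - g)*ga) * sh - ch + (h1 + g)*be + (g^2 - h1^2)*ga) * (1 - la + (g - h2)*ga)
   - ((1 - 2*be + (h2 - g)*ga) * sh - ch + (h2 + g)*be + (g^2 - h2^2)*ga) * (1 - la + (g - h1)*ga)
   = (h1 - h2) * (qf la be ga sh ch g h1 - ga*(1 - la + (g - h1)*ga)*(h2 - h1))"
  unfolding qf_def by (simp add: algebra_simps power2_eq_square)

lemma gid:
  "((1 - 2*be + (h - g1)*ga) * sh - ch + (h + g1)*be + (g1^2 - h^2)*ga) * (1 - la + (g2 - h)*ga)
   - ((1 - 2*be + (h - g2)*ga) * sh - ch + (h + g2)*be + (g2^2 - h^2)*ga) * (1 - la + (g1 - h)*ga)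
   = (g1 - g2) * (mf la be ga sh ch g1 h + ga*(1 - la + (g1 - h)*ga)*(g2 - g1))"
  unfolding mf_def by (simp add: algebra_simps power2_eq_square)

lemma m0h: "(h::real) \<le> 1 \<Longrightarrow> ga > 0 \<Longrightarrow> be \<ge> ga \<Longrightarrow> h \<ge> 0 \<Longrightarrow> mf la be ga sh ch 0 h \<ge> mf la be ga sh ch 0 1"
proof -
  assume a: "h \<le> 1" "ga > 0" "be \<ge> ga" "h \<ge> 0"
  have "mf la be ga sh ch 0 h - mf la be ga sh ch 0 1 = (1 - h) * ga * (2*be - ga*(h+1))"
    unfolding mf_def by (simp add: algebra_simps power2_eq_square)
  moreover have "ga*(h+1) \<le> ga * 2" using a by (intro mult_left_mono) auto
  then have "2*be - ga*(h+1) \<ge> 0" using a by linarith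
  then have "(1 - h) * ga * (2*be - ga*(h+1)) \<ge> 0"
    using a by (intro mult_nonneg_nonneg) auto
  ultimately show ?thesis by linarith
qed

lemma qm1: "qf la be ga sh ch g 1 + mf la be ga sh ch g 1 =
   2*((be-ga)*(1-la-ga) + ga*g*(be - 2*ga + (1-la)) + g^2*ga^2)"
  unfolding mf_def qf_def by (simp add: algebra_simps power2_eq_square)

lemma qdisc: "qf la be ga sh ch g h = (ga*h - (1-la+ga*g))^2 -
   ((1 - la)*(1 - la - be + 2*g*ga) - (2 - la - 2*be)*ga*sh - 2*g*be*ga + ga*ch)"
  unfolding qf_def by (simp add: algebra_simps power2_eq_square)

lemma mdisc: "mf la be ga sh ch g h = (ga*g + (1-la-h*ga))^2 -
   ((1 - la)*(1 - la - 2*h*ga - be) + (2 - la - 2*be)*ga*sh + 2*h*be*ga - ch*ga)"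
  unfolding mf_def by (simp add: algebra_simps power2_eq_square)

lemma Dpos:
  fixes la ga g h :: real
  assumes "ga > 0" "1 - la > 4*ga" "0 \<le> g" "g \<le> 1" "0 \<le> h" "h \<le> 1"
  shows "1 - la + (g - h)*ga > 0"
proof -
  have "(-1)*ga \<le> (g-h)*ga" using assms by (intro mult_right_mono) auto
  then show ?thesis using assms by linarith
qed

lemma hcmp:
  fixes la be ga sh ch C g h hs :: real
  assumes "ga > 0" "1 - la > 4*ga" "C \<ge> 0" "0 \<le> g" "g \<le> 1" "0 \<le> h" "h \<le> 1" "0 \<le> hs" "hs \<le> 1"
    and key: "(hs - h) * (qf la be ga sh ch g hs - ga*(1 - la + (g - hs)*ga)*(h - hs)) \<ge> 0"
  shows "fss la be ga sh ch C g h \<le> fss la be ga sh ch C g hs"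
proof -
  define N where "N = (\<lambda>h. (1 - 2*be + (h - g)*ga) * sh - ch + (h + g)*be + (g^2 - h^2)*ga)"
  define D where "D = (\<lambda>h. 1 - la + (g - h)*ga)"
  have D1: "D h > 0" "D hs > 0" unfolding D_def using Dpos assms by auto
  have "fss la be ga sh ch C g hs - fss la be ga sh ch C g h
        = C * ((N hs * D h - N h * D hs) / (D hs * D h))"
  proof -
    have a: "fss la be ga sh ch C g hs = N hs / D hs * C" "fss la be ga sh ch C g h = N h / D h * C"
      by (simp_all add: fss_def N_def D_def)
    show ?thesis unfolding a using D1 by (simp add: field_simps)
  qed
  also have "N hs * D h - N h * D hs = (hs - h) * (qf la be ga sh ch g hs - ga*(1 - la + (g - hs)*ga)*(h - hs))"
    unfolding N_def D_def by (rule hid)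
  finally have e: "fss la be ga sh ch C g hs - fss la be ga sh ch C g h = C * ((hs - h) * (qf la be ga sh ch g hs - ga*(1 - la + (g - hs)*ga)*(h - hs)) / (D hs * D h))" .
  have "C * ((hs - h) * (qf la be ga sh ch g hs - ga*(1 - la + (g - hs)*ga)*(h - hs)) / (D hs * D h)) \<ge> 0"
    by (rule mult_nonneg_nonneg[OF assms(3) divide_nonneg_pos[OF key mult_pos_pos[OF D1(2) D1(1)]]])
  then show ?thesis using e by linarith
qed

lemma gcmp:
  fixes la be ga sh ch C g h gs :: real
  assumes "ga > 0" "1 - la > 4*ga" "C \<ge> 0" "0 \<le> g" "g \<le> 1" "0 \<le> h" "h \<le> 1" "0 \<le> gs" "gs \<le> 1"
    and key: "(gs - g) * (mf la be ga sh ch gs h + ga*(1 - la + (gs - h)*ga)*(g - gs)) \<le> 0"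
  shows "fss la be ga sh ch C gs h \<le> fss la be ga sh ch C g h"
proof -
  define N where "N = (\<lambda>g. (1 - 2*be + (h - g)*ga) * sh - ch + (h + g)*be + (g^2 - h^2)*ga)"
  define D where "D = (\<lambda>g. 1 - la + (g - h)*ga)"
  have D1: "D g > 0" "D gs > 0" unfolding D_def using Dpos assms by auto
  have "fss la be ga sh ch C gs h - fss la be ga sh ch C g h
        = C * ((N gs * D g - N g * D gs) / (D gs * D g))"
  proof -
    have a: "fss la be ga sh ch C gs h = N gs / D gs * C" "fss la be ga sh ch C g h = N g / D g * C"
      by (simp_all add: fss_def N_def D_def)
    show ?thesis unfolding a using D1 by (simp add: field_simps)
  qed
  also have "N gs * D g - N g * D gs = (gs - g) * (mf la be ga sh ch gs h + ga*(1 - la + (gs - h)*ga)*(g - gs))"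
    unfolding N_def D_def by (rule gid)
  finally have e: "fss la be ga sh ch C gs h - fss la be ga sh ch C g h = C * ((gs - g) * (mf la be ga sh ch gs h + ga*(1 - la + (gs - h)*ga)*(g - gs)) / (D gs * D g))" .
  have "C * (-((gs - g) * (mf la be ga sh ch gs h + ga*(1 - la + (gs - h)*ga)*(g - gs))) / (D gs * D g)) \<ge> 0"
    using key D1 assms(3) by (intro mult_nonneg_nonneg divide_nonneg_pos) auto
  then show ?thesis using e by (simp add: divide_minus_left)
qed

context
  fixes la be ga sh ch C smin smax :: real
  assumes ga: "ga > 0" and bg: "be \<ge> ga" and L: "1 - la > 4*ga" and C: "C \<ge> 0"
    and s: "0 \<le> smin" "smin \<le> 1" "0 \<le> smax" "smax \<le> 1"
begin

lemma gA: assumes "0 \<le> h" "h \<le> 1" "mf la be ga sh ch 0 h \<ge> 0" "g' \<in> {0..smin}"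
  shows "fss la be ga sh ch C 0 h \<le> fss la be ga sh ch C g' h"
proof (rule gcmp[OF ga L C])
  have D: "1 - la + (0 - h)*ga > 0" using Dpos[OF ga L, of 0 h] assms by simp
  have "mf la be ga sh ch 0 h + ga * (1 - la + (0 - h) * ga) * (g' - 0) \<ge> 0"
    using assms(3,4) mult_nonneg_nonneg[OF less_imp_le[OF mult_pos_pos[OF ga D]], of g'] by simp
  then show "(0 - g') * (mf la be ga sh ch 0 h + ga * (1 - la + (0 - h) * ga) * (g' - 0)) \<le> 0"
    using assms by (intro mult_nonpos_nonneg) auto
qed (use assms s in auto)

lemma gE: assumes "0 \<le> h" "h \<le> 1" "mf la be ga sh ch smin h \<le> 0" "g' \<in> {0..smin}"
  shows "fss la be ga sh ch C smin h \<le> fss la be ga sh ch C g' h"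
proof (rule gcmp[OF ga L C])
  have D: "1 - la + (smin - h)*ga > 0" using Dpos[OF ga L] assms s by auto
  have "ga * (1 - la + (smin - h) * ga) * (g' - smin) \<le> 0"
    using assms D ga s by (intro mult_nonneg_nonpos) auto
  then show "(smin - g') * (mf la be ga sh ch smin h + ga * (1 - la + (smin - h) * ga) * (g' - smin)) \<le> 0"
    using assms by (intro mult_nonneg_nonpos) auto
qed (use assms s in auto)

lemma gF: assumes "0 \<le> h" "h \<le> 1" "mf la be ga sh ch gr h = 0" "0 \<le> gr" "gr \<le> 1" "g' \<in> {0..smin}"
  shows "fss la be ga sh ch C gr h \<le> fss la be ga sh ch C g' h"
proof (rule gcmp[OF ga L C])
  have D: "1 - la + (gr - h)*ga > 0" using Dpos[OF ga L] assms s by auto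
  have "(gr - g') * (mf la be ga sh ch gr h + ga * (1 - la + (gr - h) * ga) * (g' - gr))
     = - (ga * (1 - la + (gr - h) * ga) * (gr - g')^2)" using assms(3) by (simp add: algebra_simps power2_eq_square)
  also have "\<dots> \<le> 0" using D ga by simp
  finally show "(gr - g') * (mf la be ga sh ch gr h + ga * (1 - la + (gr - h) * ga) * (g' - gr)) \<le> 0" .
qed (use assms s in auto)

lemma hB: assumes "0 \<le> g" "g \<le> 1" "qf la be ga sh ch g 1 \<ge> 0" "h' \<in> {smax..1}"
  shows "fss la be ga sh ch C g h' \<le> fss la be ga sh ch C g 1"
proof (rule hcmp[OF ga L C])
  have D: "1 - la + (g - 1)*ga > 0" using Dpos[OF ga L] assms by auto
  have "qf la be ga sh ch g 1 - ga * (1 - la + (g - 1) * ga) * (h' - 1) \<ge> 0"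
    using assms D ga s mult_nonneg_nonpos[of "ga * (1 - la + (g - 1) * ga)" "h' - 1"] by auto
  then show "(1 - h') * (qf la be ga sh ch g 1 - ga * (1 - la + (g - 1) * ga) * (h' - 1)) \<ge> 0"
    using assms by (intro mult_nonneg_nonneg) auto
qed (use assms s in auto)

lemma hC: assumes "0 \<le> g" "g \<le> 1" "qf la be ga sh ch g smax \<le> 0" "h' \<in> {smax..1}"
  shows "fss la be ga sh ch C g h' \<le> fss la be ga sh ch C g smax"
proof (rule hcmp[OF ga L C])
  have D: "1 - la + (g - smax)*ga > 0" using Dpos[OF ga L] assms s by auto
  have "qf la be ga sh ch g smax - ga * (1 - la + (g - smax) * ga) * (h' - smax) \<le> 0"
  proof -
    have "0 \<le> ga * (1 - la + (g - smax) * ga) * (h' - smax)"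
      using assms(4) mult_nonneg_nonneg[OF less_imp_le[OF mult_pos_pos[OF ga D]], of "h' - smax"] by simp
    then show ?thesis using assms(3) by linarith
  qed
  then show "(smax - h') * (qf la be ga sh ch g smax - ga * (1 - la + (g - smax) * ga) * (h' - smax)) \<ge> 0"
    using assms by (intro mult_nonpos_nonpos) auto
qed (use assms s in auto)

lemma hD: assumes "0 \<le> g" "g \<le> 1" "qf la be ga sh ch g hr = 0" "0 \<le> hr" "hr \<le> 1" "h' \<in> {smax..1}"
  shows "fss la be ga sh ch C g h' \<le> fss la be ga sh ch C g hr"
proof (rule hcmp[OF ga L C])
  have D: "1 - la + (g - hr)*ga > 0" using Dpos[OF ga L] assms s by auto
  have "(hr - h') * (qf la be ga sh ch g hr - ga * (1 - la + (g - hr) * ga) * (h' - hr))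
     = ga * (1 - la + (g - hr) * ga) * (hr - h')^2" using assms(3) by (simp add: algebra_simps power2_eq_square)
  also have "\<dots> \<ge> 0" using D ga by simp
  finally show "(hr - h') * (qf la be ga sh ch g hr - ga * (1 - la + (g - hr) * ga) * (h' - hr)) \<ge> 0" .
qed (use assms s in auto)

lemma qm_pos: assumes "0 \<le> g" shows "qf la be ga sh ch g 1 + mf la be ga sh ch g 1 \<ge> 0"
proof -
  have "(be-ga)*(1-la-ga) \<ge> 0" using bg L ga by (intro mult_nonneg_nonneg) auto
  moreover have "ga*g*(be - 2*ga + (1-la)) \<ge> 0" using bg L ga assms by (intro mult_nonneg_nonneg) auto
  ultimately show ?thesis unfolding qm1 by simp
qed

lemma r0: assumes "qf la be ga sh ch 0 1 < 0" "qf la be ga sh ch 0 smax > 0"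
  shows "qf la be ga sh ch 0 (rf la be ga sh ch 0) = 0" "smax \<le> rf la be ga sh ch 0" "rf la be ga sh ch 0 \<le> 1"
proof -
  define De where "De = (1 - la)*(1 - la - be + 2*0*ga) - (2 - la - 2*be)*ga*sh - 2*0*be*ga + ga*ch"
  define S where "S = sqrt De"
  have q: "\<And>h. qf la be ga sh ch 0 h = (ga*h - (1-la))^2 - De" unfolding De_def qdisc by simp
  have r: "ga * rf la be ga sh ch 0 = (1-la) - S" unfolding rf_def S_def De_def using ga
    by (simp add: field_simps)
  have "(ga - (1-la))^2 < De" using assms(1) q[of 1] by simp
  then have De: "De > 0" and "sqrt ((ga - (1-la))^2) < S" unfolding S_def
    by (auto intro: real_sqrt_less_mono le_less_trans[OF zero_le_power2] simp del: real_sqrt_abs)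
  then have "1 - la - ga < S" by simp
  then have "ga * rf la be ga sh ch 0 < ga * 1" using r by simp
  then show "rf la be ga sh ch 0 \<le> 1" using ga by simp
  have "(ga*smax - (1-la))^2 > De" using assms(2) q[of smax] by simp
  then have "sqrt ((ga*smax - (1-la))^2) > S" unfolding S_def
    by (auto intro: real_sqrt_less_mono simp del: real_sqrt_abs)
  moreover have "ga*smax \<le> ga" using s ga by (simp add: mult_left_le)
  ultimately have "1 - la - ga*smax > S" using L ga by simp
  then have "ga * rf la be ga sh ch 0 > ga * smax" using r by simp
  then show "smax \<le> rf la be ga sh ch 0" using ga by simp
  have "S^2 = De" unfolding S_def using De by simp
  then show "qf la be ga sh ch 0 (rf la be ga sh ch 0) = 0" unfolding q r by (simp add: power2_commute)
qed

lemma w1: assumes "mf la be ga sh ch 0 1 < 0" "mf la be ga sh ch smin 1 > 0"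
  shows "mf la be ga sh ch (wf la be ga sh ch 1) 1 = 0" "0 \<le> wf la be ga sh ch 1" "wf la be ga sh ch 1 \<le> smin"
proof -
  define De where "De = (1 - la)*(1 - la - 2*1*ga - be) + (2 - la - 2*be)*ga*sh + 2*1*be*ga - ch*ga"
  define S where "S = sqrt De"
  have q: "\<And>g. mf la be ga sh ch g 1 = (ga*g + (1-la-1*ga))^2 - De" unfolding De_def mdisc by simp
  have r: "ga * wf la be ga sh ch 1 = S - (1-la-ga)" unfolding wf_def S_def De_def using ga
    by (simp add: field_simps)
  have "(1-la-ga)^2 < De" using assms(1) q[of 0] by simp
  then have De: "De > 0" and "sqrt ((1-la-ga)^2) < S" unfolding S_def
    by (auto intro: real_sqrt_less_mono le_less_trans[OF zero_le_power2] simp del: real_sqrt_abs)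
  then have "1 - la - ga < S" by simp
  then have "ga * wf la be ga sh ch 1 > ga * 0" using r by simp
  then show "0 \<le> wf la be ga sh ch 1" using ga by (simp add: zero_less_mult_iff)
  have "(ga*smin + (1-la-ga))^2 > De" using assms(2) q[of smin] by simp
  then have "sqrt ((ga*smin + (1-la-ga))^2) > S" unfolding S_def
    by (auto intro: real_sqrt_less_mono simp del: real_sqrt_abs)
  moreover have "ga*smin \<ge> 0" using s ga by simp
  ultimately have "ga*smin + (1-la-ga) > S" using L ga by simp
  then have "ga * wf la be ga sh ch 1 < ga * smin" using r by simp
  then show "wf la be ga sh ch 1 \<le> smin" using ga by simp
  have "S^2 = De" unfolding S_def using De by simp
  then show "mf la be ga sh ch (wf la be ga sh ch 1) 1 = 0" unfolding q using r by simp
qed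

lemma core: "let (gs, hs) =
           (if mf la be ga sh ch 0 1 \<ge> 0 then
              (if qf la be ga sh ch 0 1 \<ge> 0 then (0, 1)
               else if qf la be ga sh ch 0 smax \<le> 0 then (0, smax)
               else (0, rf la be ga sh ch 0))
            else if mf la be ga sh ch smin 1 \<le> 0 then (smin, 1)
            else (wf la be ga sh ch 1, 1))
         in nash_eq (fss la be ga sh ch C) {0..smin} {smax..1} gs hs"
proof (cases "mf la be ga sh ch 0 1 \<ge> 0")
  case m01: True
  have mh: "\<And>h. h \<in> {smax..1} \<Longrightarrow> mf la be ga sh ch 0 h \<ge> 0"
  proof -
    fix h assume "h \<in> {smax..1}"
    then have "mf la be ga sh ch 0 h \<ge> mf la be ga sh ch 0 1" using m0h[OF _ ga bg, of h la sh ch] s by auto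
    then show "mf la be ga sh ch 0 h \<ge> 0" using m01 by linarith
  qed
  show ?thesis
  proof (cases "qf la be ga sh ch 0 1 \<ge> 0")
    case True
    then show ?thesis using m01 s mh gA hB[of 0] unfolding nash_eq_def by auto
  next
    case q1: False
    show ?thesis
    proof (cases "qf la be ga sh ch 0 smax \<le> 0")
      case True
      then show ?thesis using m01 q1 s mh[of smax] gA hC[of 0] unfolding nash_eq_def by auto
    next
      case False
      note R = r0[OF _ _] 
      have rr: "qf la be ga sh ch 0 (rf la be ga sh ch 0) = 0" "smax \<le> rf la be ga sh ch 0" "rf la be ga sh ch 0 \<le> 1"
        using r0 q1 False by auto
      have "rf la be ga sh ch 0 \<in> {smax..1}" using rr by auto
      then show ?thesis using m01 q1 False s rr mh gA hD[of 0 "rf la be ga sh ch 0"] unfolding nash_eq_def by auto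
    qed
  qed
next
  case m01: False
  show ?thesis
  proof (cases "mf la be ga sh ch smin 1 \<le> 0")
    case True
    have "qf la be ga sh ch smin 1 \<ge> 0" using qm_pos[of smin] s True by linarith
    then show ?thesis using m01 True s gE hB[of smin] unfolding nash_eq_def by auto
  next
    case False
    have ww: "mf la be ga sh ch (wf la be ga sh ch 1) 1 = 0" "0 \<le> wf la be ga sh ch 1" "wf la be ga sh ch 1 \<le> smin"
      using w1 m01 False by auto
    have "qf la be ga sh ch (wf la be ga sh ch 1) 1 \<ge> 0" using qm_pos[of "wf la be ga sh ch 1"] ww by linarith
    then show ?thesis using m01 False s ww gF[of 1 "wf la be ga sh ch 1"] hB[of "wf la be ga sh ch 1"] unfolding nash_eq_def by auto
  qed
qed

end



lemma lam_le:
  fixes n :: nat and W :: "real mat" and c :: "real vec"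
  assumes n_pos: "n > 0"
    and W_dim: "W \<in> carrier_mat n n"
    and W_nonneg: "\<forall>i<n. \<forall>j<n. W $$ (i,j) \<ge> 0"
    and c_dim: "c \<in> carrier_vec n"
    and c_pos: "\<forall>i<n. c $ i > 0"
    and c_eig: "transpose_mat W *\<^sub>v c = spec_rad W \<cdot>\<^sub>v c"
  shows "spec_rad W \<le> norm_inf_mat W" "csum n c > 0"
proof -
  have dims: "dim_row W = n" "dim_col W = n" "dim_vec c = n" using W_dim c_dim by auto
  have comp: "spec_rad W * c $ j = (\<Sum>i<n. W $$ (i,j) * c $ i)" if j: "j < n" for j
  proof -
    have "(transpose_mat W *\<^sub>v c) $ j = (spec_rad W \<cdot>\<^sub>v c) $ j" using c_eig by simp
    moreover have "(transpose_mat W *\<^sub>v c) $ j = (\<Sum>i<n. W $$ (i,j) * c $ i)"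
      using j dims by (simp add: scalar_prod_def lessThan_atLeast0)
    moreover have "(spec_rad W \<cdot>\<^sub>v c) $ j = spec_rad W * c $ j" using j dims by simp
    ultimately show ?thesis by simp
  qed
  define S where "S = (\<Sum>j<n. c $ j)"
  have Spos: "S > 0" unfolding S_def using c_pos n_pos by (intro sum_pos) auto
  then show "csum n c > 0" unfolding csum_def S_def .
  have rows: "(\<Sum>j<n. W $$ (i,j)) \<le> norm_inf_mat W" if i: "i < n" for i
  proof -
    have "(\<Sum>j<n. W $$ (i,j)) = (\<Sum>j<dim_col W. \<bar>W $$ (i,j)\<bar>)"
      using dims W_nonneg i by (intro sum.cong) auto
    also have "\<dots> \<le> norm_inf_mat W" unfolding norm_inf_mat_def
    proof (rule Max_ge)
      have "{(\<Sum>j<dim_col W. \<bar>W $$ (i,j)\<bar>) | i. i < dim_row W} = (\<lambda>i. \<Sum>j<dim_col W. \<bar>W $$ (i,j)\<bar>) ` {..<dim_row W}"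
        by auto
      then show "finite {(\<Sum>j<dim_col W. \<bar>W $$ (i,j)\<bar>) | i. i < dim_row W}" by simp
      show "(\<Sum>j<dim_col W. \<bar>W $$ (i,j)\<bar>) \<in> {(\<Sum>j<dim_col W. \<bar>W $$ (i,j)\<bar>) | i. i < dim_row W}"
        using i dims by auto
    qed
    finally show ?thesis .
  qed
  have "spec_rad W * S = (\<Sum>j<n. \<Sum>i<n. W $$ (i,j) * c $ i)"
    unfolding S_def sum_distrib_left using comp by simp
  also have "\<dots> = (\<Sum>i<n. c $ i * (\<Sum>j<n. W $$ (i,j)))"
    by (subst sum.swap) (simp add: sum_distrib_left mult.commute)
  also have "\<dots> \<le> (\<Sum>i<n. c $ i * norm_inf_mat W)"
    using rows c_pos by (intro sum_mono mult_left_mono) (auto simp: less_imp_le)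
  also have "\<dots> = norm_inf_mat W * S" unfolding S_def by (simp add: sum_distrib_left mult.commute)
  finally show "spec_rad W \<le> norm_inf_mat W" using Spos by simp
qed

lemma srange:
  fixes s :: "real vec"
  assumes "n > 0" "\<forall>i<n. 0 \<le> s $ i \<and> s $ i \<le> 1"
  shows "0 \<le> Min {s $ i | i. i < n}" "Min {s $ i | i. i < n} \<le> 1"
    "0 \<le> Max {s $ i | i. i < n}" "Max {s $ i | i. i < n} \<le> 1"
proof -
  have e: "{s $ i | i. i < n} = (\<lambda>i. s $ i) ` {..<n}" by auto
  have f: "finite {s $ i | i. i < n}" "{s $ i | i. i < n} \<noteq> {}" unfolding e using assms by auto
  obtain i where "i < n" "Min {s $ i | i. i < n} = s $ i" using Min_in[OF f] by auto
  then show "0 \<le> Min {s $ i | i. i < n}" "Min {s $ i | i. i < n} \<le> 1" using assms by auto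
  obtain j where "j < n" "Max {s $ i | i. i < n} = s $ j" using Max_in[OF f] by auto
  then show "0 \<le> Max {s $ i | i. i < n}" "Max {s $ i | i. i < n} \<le> 1" using assms by auto
qed
theorem theorem3:
  fixes n :: nat and W :: "real mat" and c s :: "real vec" and \<beta> \<gamma> :: real
  assumes n_pos: "n > 0"
    and W_dim: "W \<in> carrier_mat n n"
    and W_nonneg: "\<forall>i<n. \<forall>j<n. W $$ (i,j) \<ge> 0"
    and W_diag: "\<forall>i<n. W $$ (i,i) = 0"
    and c_dim: "c \<in> carrier_vec n"
    and c_pos: "\<forall>i<n. c $ i > 0"
    and c_eig: "transpose_mat W *\<^sub>v c = spec_rad W \<cdot>\<^sub>v c"
    and beta_gamma: "\<beta> \<ge> \<gamma>" and gamma_pos: "\<gamma> > 0"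
    and norm_cond: "1 - max (norm_inf_mat W) (norm_one_mat W) > max (2*\<beta>) (4*\<gamma>)"
    and s_dim: "s \<in> carrier_vec n"
    and s_range: "\<forall>i<n. 0 \<le> s $ i \<and> s $ i \<le> 1"
  defines "smax \<equiv> Max {s $ i | i. i < n}"
    and "smin \<equiv> Min {s $ i | i. i < n}"
    and "F \<equiv> fss (spec_rad W) \<beta> \<gamma> (shat n c s) (chi n W c s) (csum n c)"
    and "q \<equiv> qf (spec_rad W) \<beta> \<gamma> (shat n c s) (chi n W c s)"
    and "m \<equiv> mf (spec_rad W) \<beta> \<gamma> (shat n c s) (chi n W c s)"
    and "r \<equiv> rf (spec_rad W) \<beta> \<gamma> (shat n c s) (chi n W c s)"
    and "w \<equiv> wf (spec_rad W) \<beta> \<gamma> (shat n c s) (chi n W c s)"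
  shows "let (gs, hs) =
           (if m 0 1 \<ge> 0 then
              (if q 0 1 \<ge> 0 then (0, 1)
               else if q 0 smax \<le> 0 then (0, smax)
               else (0, r 0))
            else if m smin 1 \<le> 0 then (smin, 1)
            else (w 1, 1))
         in nash_eq F {0..smin} {smax..1} gs hs"
  proof -
  have la: "spec_rad W \<le> norm_inf_mat W" and C: "csum n c > 0"
    using lam_le[OF n_pos W_dim W_nonneg c_dim c_pos c_eig] by auto
  have L: "1 - spec_rad W > 4*\<gamma>" using la norm_cond by linarith
  note sr = srange[OF n_pos s_range]
  show ?thesis
    unfolding smax_def smin_def F_def q_def m_def r_def w_def
    by (rule core[OF gamma_pos beta_gamma L less_imp_le[OF C] sr(1,2,3,4)])
qed

end
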